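(* Let $X\subset[0,1]$, let $f\in P(X)$, $\delta_0>0$, $p>0$ and $\epsilon>0$. Then there exist $\delta_1$ with $0<\delta_1<\delta_0$ and $g\in P(X)$ with $g>0$ and $\|g\|_\infty<p$ such that $$\frac{\log N_{\delta_1}(\mathrm{graph}(g+f))}{-\log\delta_1}\ \geq\ \limsup_{m\to\infty}\frac{\log g_m(X)}{\log m}-\epsilon,$$ where $g_m(X)=\sum_{k=1}^{m}\min\{m,\#(X\cap[\frac{k-1}{m},\frac{k}{m}])\}$.
   Context: $P(X)$ denotes the set of restrictions to $X$ of polygonal (continuous piecewise linear with finitely many pieces) functions. For $\delta>0$ and $F\subset\mathbb{R}^2$, $N_\delta(F)$ is the number of squares of the $\delta$-grid $\{[n_1\delta,(n_1+1)\delta)\times[n_2\delta,(n_2+1)\delta): n_1,n_2\in\mathbb{Z}\}$ that intersect $F$. $\mathrm{graph}(h)=\{(x,h(x)):x\in X\}$, $\|\cdot\|_\infty$ is the sup norm on $X$, and $\#A$ denotes cardinality (possibly infinite, with $\min\{m,\infty\}=m$). *)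

theory Defs
  imports "HOL-Analysis.Analysis"
begin

definition polygonal :: "(real \<Rightarrow> real) \<Rightarrow> bool" where
  "polygonal \<phi> \<longleftrightarrow> continuous_on UNIV \<phi> \<and>
     (\<exists>S. finite S \<and> (\<forall>a b. a < b \<and> {a<..<b} \<inter> S = {} \<longrightarrow>
        (\<exists>c d. \<forall>x\<in>{a..b}. \<phi> x = c * x + d)))"

text \<open>P(X): restrictions to X of polygonal functions; a function h :: real => real
  represents an element of P(X) if it agrees on X with some polygonal function
  (values outside X are irrelevant).\<close>
definition PX :: "real set \<Rightarrow> (real \<Rightarrow> real) set" where
  "PX X = {h. \<exists>\<phi>. polygonal \<phi> \<and> (\<forall>x\<in>X. h x = \<phi> x)}"

definition graph_on :: "real set \<Rightarrow> (real \<Rightarrow> real) \<Rightarrow> (real \<times> real) set" where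
  "graph_on X h = {(x, h x) | x. x \<in> X}"

definition N_delta :: "real \<Rightarrow> (real \<times> real) set \<Rightarrow> nat" where
  "N_delta \<delta> F = card {n :: int \<times> int. \<exists>z\<in>F.
      of_int (fst n) * \<delta> \<le> fst z \<and> fst z < (of_int (fst n) + 1) * \<delta> \<and>
      of_int (snd n) * \<delta> \<le> snd z \<and> snd z < (of_int (snd n) + 1) * \<delta>}"

definition supnorm_on :: "real set \<Rightarrow> (real \<Rightarrow> real) \<Rightarrow> real" where
  "supnorm_on X h = (if X = {} then 0 else (SUP x\<in>X. \<bar>h x\<bar>))"

text \<open>min{m, #A}, with min{m, infinity} = m.\<close>
definition min_card :: "nat \<Rightarrow> real set \<Rightarrow> nat" where
  "min_card m A = (if finite A then min m (card A) else m)"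

definition g_m :: "nat \<Rightarrow> real set \<Rightarrow> nat" where
  "g_m m X = (\<Sum>k=1..m. min_card m (X \<inter> {real (k - 1) / real m .. real k / real m}))"

end

theory Submission
  imports Defs
begin

lemma polygonal_const: "polygonal (\<lambda>x. c)"
  unfolding polygonal_def by (intro conjI continuous_intros exI[of _ "{}"] allI impI exI[of _ 0] exI[of _ c]) auto

lemma polygonal_abs: "polygonal (\<lambda>x. \<bar>x - b\<bar>)"
  unfolding polygonal_def
proof (intro conjI exI[of _ "{b}"] allI impI)
  show "continuous_on UNIV (\<lambda>x. \<bar>x - b\<bar>)" by (intro continuous_intros)
  fix a c :: real assume h: "a < c \<and> {a<..<c} \<inter> {b} = {}"
  show "\<exists>m d. \<forall>x\<in>{a..c}. \<bar>x - b\<bar> = m * x + d"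
  proof (cases "b \<le> a")
    case True then show ?thesis by (intro exI[of _ 1] exI[of _ "-b"]) auto
  next
    case False then have "c \<le> b" using h by auto
    then show ?thesis by (intro exI[of _ "-1"] exI[of _ "b"]) auto
  qed
qed auto

lemma polygonal_scale: "polygonal \<phi> \<Longrightarrow> polygonal (\<lambda>x. a * \<phi> x)"
  unfolding polygonal_def
proof (elim conjE exE, intro conjI exI)
  fix S assume c: "continuous_on UNIV \<phi>" and S: "finite S"
    and H: "\<forall>u v. u < v \<and> {u<..<v} \<inter> S = {} \<longrightarrow> (\<exists>c d. \<forall>x\<in>{u..v}. \<phi> x = c * x + d)"
  show "continuous_on UNIV (\<lambda>x. a * \<phi> x)" using c by (intro continuous_intros)
  show "finite S" by fact
  show "\<forall>u v. u < v \<and> {u<..<v} \<inter> S = {} \<longrightarrow> (\<exists>c d. \<forall>x\<in>{u..v}. a * \<phi> x = c * x + d)"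
  proof (intro allI impI)
    fix u v assume "u < v \<and> {u<..<v} \<inter> S = {}"
    then obtain c d where "\<forall>x\<in>{u..v}. \<phi> x = c * x + d" using H by blast
    then show "\<exists>c d. \<forall>x\<in>{u..v}. a * \<phi> x = c * x + d"
      by (intro exI[of _ "a*c"] exI[of _ "a*d"]) (auto simp: algebra_simps)
  qed
qed

lemma polygonal_add: "polygonal \<phi> \<Longrightarrow> polygonal \<psi> \<Longrightarrow> polygonal (\<lambda>x. \<phi> x + \<psi> x)"
  unfolding polygonal_def
proof (elim conjE exE, intro conjI exI)
  fix S T assume c: "continuous_on UNIV \<phi>" and S: "finite S"
    and H: "\<forall>u v. u < v \<and> {u<..<v} \<inter> S = {} \<longrightarrow> (\<exists>c d. \<forall>x\<in>{u..v}. \<phi> x = c * x + d)"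
    and c2: "continuous_on UNIV \<psi>" and T: "finite T"
    and H2: "\<forall>u v. u < v \<and> {u<..<v} \<inter> T = {} \<longrightarrow> (\<exists>c d. \<forall>x\<in>{u..v}. \<psi> x = c * x + d)"
  show "continuous_on UNIV (\<lambda>x. \<phi> x + \<psi> x)" using c c2 by (intro continuous_intros)
  show "finite (S \<union> T)" using S T by simp
  show "\<forall>u v. u < v \<and> {u<..<v} \<inter> (S \<union> T) = {} \<longrightarrow> (\<exists>c d. \<forall>x\<in>{u..v}. \<phi> x + \<psi> x = c * x + d)"
  proof (intro allI impI)
    fix u v assume "u < v \<and> {u<..<v} \<inter> (S \<union> T) = {}"
    then obtain c d c' d' where "\<forall>x\<in>{u..v}. \<phi> x = c * x + d" "\<forall>x\<in>{u..v}. \<psi> x = c' * x + d'"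
      using H H2 by blast
    then show "\<exists>c d. \<forall>x\<in>{u..v}. \<phi> x + \<psi> x = c * x + d"
      by (intro exI[of _ "c+c'"] exI[of _ "d+d'"]) (auto simp: algebra_simps)
  qed
qed

lemma polygonal_sum: "finite I \<Longrightarrow> (\<And>i. i \<in> I \<Longrightarrow> polygonal (\<phi> i)) \<Longrightarrow> polygonal (\<lambda>x. \<Sum>i\<in>I. \<phi> i x)"
  by (induction I rule: finite_induct) (auto intro: polygonal_const polygonal_add)

definition tent :: "real \<Rightarrow> real \<Rightarrow> real \<Rightarrow> real" where
  "tent w y x = (\<bar>x - (y - w)\<bar> - 2 * \<bar>x - y\<bar> + \<bar>x - (y + w)\<bar>) / (2 * w)"

lemma polygonal_tent: "polygonal (tent w y)"
proof -
  have "polygonal (\<lambda>x. (1/(2*w)) * \<bar>x - (y - w)\<bar> + ((-2/(2*w)) * \<bar>x - y\<bar> + (1/(2*w)) * \<bar>x - (y + w)\<bar>))"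
    by (intro polygonal_add polygonal_scale polygonal_abs)
  moreover have "(\<lambda>x. (1/(2*w)) * \<bar>x - (y - w)\<bar> + ((-2/(2*w)) * \<bar>x - y\<bar> + (1/(2*w)) * \<bar>x - (y + w)\<bar>)) = tent w y"
    by (cases "w = 0") (auto simp: tent_def fun_eq_iff field_simps)
  ultimately show ?thesis by simp
qed

lemma tent_nonneg: "w > 0 \<Longrightarrow> tent w y x \<ge> 0"
  unfolding tent_def by (auto simp: abs_if field_simps)
lemma tent_le1: "w > 0 \<Longrightarrow> tent w y x \<le> 1"
  unfolding tent_def by (auto simp: abs_if field_simps)
lemma tent_center: "w > 0 \<Longrightarrow> tent w y y = 1"
  unfolding tent_def by (auto simp: abs_if field_simps)
lemma tent_zero: "w > 0 \<Longrightarrow> \<bar>x - y\<bar> \<ge> w \<Longrightarrow> tent w y x = 0"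
  unfolding tent_def by (auto simp: abs_if split: if_splits)



lemma rows_exist:
  fixes col :: "'a \<Rightarrow> int" and q :: "'a \<Rightarrow> int"
  assumes "finite A" "\<And>j. card {x\<in>A. col x = j} \<le> K"
  shows "\<exists>r. (\<forall>x\<in>A. q x \<le> r x \<and> r x < q x + int K) \<and>
             (\<forall>x\<in>A. \<forall>y\<in>A. col x = col y \<and> r x = r y \<longrightarrow> x = y)"
  using assms
proof (induction A rule: finite_induct)
  case empty then show ?case by auto
next
  case (insert x A)
  have "card {y\<in>A. col y = j} \<le> K" for j
    by (rule order_trans[OF card_mono insert.prems[of j]]) (use insert in auto)
  then obtain r where r1: "\<forall>x\<in>A. q x \<le> r x \<and> r x < q x + int K"
    and r2: "\<forall>x\<in>A. \<forall>y\<in>A. col x = col y \<and> r x = r y \<longrightarrow> x = y"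
    using insert.IH by blast
  define F where "F = {y\<in>A. col y = col x}"
  have "insert x F \<subseteq> {y\<in>insert x A. col y = col (x)}" unfolding F_def by auto
  then have "card (insert x F) \<le> K"
    using order_trans[OF card_mono insert.prems[of "col x"]] insert by auto
  moreover have "finite F" "x \<notin> F" using insert unfolding F_def by auto
  ultimately have cF: "card F < K" by simp
  have "card (r ` F) < card {q x..<q x + int K}"
    using cF card_image_le[OF \<open>finite F\<close>, of r] by simp
  have "\<not> {q x..<q x + int K} \<subseteq> r ` F"
  proof
    assume "{q x..<q x + int K} \<subseteq> r ` F"
    then have "card {q x..<q x + int K} \<le> card (r ` F)"
      by (intro card_mono) (use \<open>finite F\<close> in auto)
    then show False using \<open>card (r ` F) < card {q x..<q x + int K}\<close> by simp
  qed
  then obtain v where v: "v \<in> {q x..<q x + int K}" "v \<notin> r ` F" by blast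
  have P1: "\<forall>y\<in>insert x A. q y \<le> (r(x := v)) y \<and> (r(x := v)) y < q y + int K"
    using r1 v by auto
  have P2: "y = z" if yz: "y \<in> insert x A" "z \<in> insert x A"
      "col y = col z" "(r(x := v)) y = (r(x := v)) z" for y z
  proof (cases "y = x"; cases "z = x")
    assume "y = x" "z \<noteq> x"
    then have "z \<in> F" "r z = v" using yz insert unfolding F_def by auto
    then show ?thesis using v by auto
  next
    assume "y \<noteq> x" "z = x"
    then have "y \<in> F" "r y = v" using yz insert unfolding F_def by auto
    then show ?thesis using v by auto
  next
    assume "y \<noteq> x" "z \<noteq> x"
    then show ?thesis using yz r2 by auto
  qed auto
  show ?case using P1 P2 by blast
qed

lemma min_card_le: "min_card m A \<le> m"
  unfolding min_card_def by auto

lemma min_card_mono: "A \<subseteq> B \<Longrightarrow> min_card m A \<le> min_card m B"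
  unfolding min_card_def
  using finite_subset[of A B] card_mono[of B A] by auto

lemma min_card_union: "min_card m (A \<union> B) \<le> min_card m A + min_card m B"
  unfolding min_card_def
  using card_Un_le[of A B] by auto

lemma min_card_scale:
  assumes "m \<le> c * K" "c \<ge> 1"
  shows "min_card m A \<le> c * min_card K A"
proof (cases "finite A")
  case True
  show ?thesis
  proof (cases "card A \<le> K")
    case True
    have "min m (card A) \<le> card A" by simp
    also have "card A \<le> c * card A" using assms by simp
    finally show ?thesis using \<open>finite A\<close> True unfolding min_card_def by simp
  next
    case False then show ?thesis using \<open>finite A\<close> assms unfolding min_card_def by auto
  qed
next
  case False then show ?thesis using assms unfolding min_card_def by auto
qed

lemma g_m_le: "g_m m X \<le> m * m"
proof -
  have "g_m m X \<le> (\<Sum>k=1..m. m)" unfolding g_m_def by (intro sum_mono min_card_le)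
  then show ?thesis by simp
qed

lemma sum_shift_ident:
  fixes F :: "nat \<Rightarrow> nat"
  shows "(\<Sum>k=1..M. F (k - 1) + F k) + F 0 + F M = 2 * (\<Sum>j=0..M. F j)"
  by (induction M) (auto simp: )

lemma L1: "(c0::nat) \<ge> 1 \<Longrightarrow> M \<le> c0 * ((M + c0 - 1) div c0)"
proof -
  assume c: "c0 \<ge> 1"
  have "c0 * ((M+c0-1) div c0) + (M+c0-1) mod c0 = M + c0 - 1" by (rule mult_div_mod_eq)
  moreover have "(M+c0-1) mod c0 < c0" using c by simp
  ultimately show ?thesis using c by linarith
qed



lemma finite_sep:
  fixes S :: "real set"
  assumes "finite S"
  shows "\<exists>w>0. \<forall>x\<in>S. \<forall>y\<in>S. x \<noteq> y \<longrightarrow> 2 * w \<le> \<bar>x - y\<bar>"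
proof -
  define D where "D = (\<lambda>(x,y). \<bar>x - y\<bar>) ` {(x,y)\<in>S\<times>S. x \<noteq> y}"
  have "{(x,y)\<in>S\<times>S. x \<noteq> y} \<subseteq> S \<times> S" by auto
  then have "finite {(x,y)\<in>S\<times>S. x \<noteq> y}" using assms finite_subset by blast
  then have fD: "finite D" unfolding D_def by blast
  show ?thesis
  proof (cases "D = {}")
    case True then show ?thesis unfolding D_def by (intro exI[of _ 1]) auto
  next
    case False
    have "Min D \<in> D" using fD False by (rule Min_in)
    then have pos: "Min D > 0" unfolding D_def by auto
    have "\<forall>x\<in>S. \<forall>y\<in>S. x \<noteq> y \<longrightarrow> Min D \<le> \<bar>x - y\<bar>"
      using fD unfolding D_def by (auto intro!: Min_le)
    then show ?thesis using pos by (intro exI[of _ "Min D / 2"]) auto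
  qed
qed

lemma polygonal_bounded:
  assumes "polygonal \<phi>"
  shows "\<exists>B. \<forall>x\<in>{0..1}. \<bar>\<phi> x\<bar> \<le> B"
proof -
  have "continuous_on {0..1} \<phi>" using assms unfolding polygonal_def
    using continuous_on_subset by blast
  then have "bounded (\<phi> ` {0..1})"
    by (intro compact_imp_bounded compact_continuous_image) auto
  then show ?thesis unfolding bounded_iff by auto
qed

lemma col_cover:
  fixes M k :: nat and x :: real
  assumes "M \<ge> 1" "k \<ge> 1" "real (k - 1) / real M \<le> x" "x \<le> real k / real M"
  shows "\<lfloor>x * M\<rfloor> = int (k - 1) \<or> \<lfloor>x * M\<rfloor> = int k"
proof -
  have Mp: "real M > 0" using assms by simp
  have a: "real (k - 1) \<le> x * M" using assms(3) Mp by (simp add: field_simps)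
  have b: "x * M \<le> real k" using assms(4) Mp by (simp add: field_simps)
  have k1: "real (k - 1) = real k - 1" using assms(2) by simp
  show ?thesis
  proof (cases "x * M = real k")
    case True then show ?thesis by simp
  next
    case False
    then have "x * M < real k" using b by simp
    then have "\<lfloor>x * M\<rfloor> = int k - 1" using a k1 by (intro floor_eq_iff[THEN iffD2]) auto
    then show ?thesis using assms(2) by auto
  qed
qed



lemma construction:
  fixes X :: "real set" and f \<phi> :: "real \<Rightarrow> real" and M c0 :: nat
  assumes X: "X \<subseteq> {0..1}" and phi: "polygonal \<phi>" and fphi: "\<forall>x\<in>X. f x = \<phi> x"
    and p: "p > 0" and M1: "M \<ge> 1" and c01: "c0 \<ge> 1" and c0p: "real c0 \<ge> 4 / p"
    and Mp: "real M \<ge> 8 / p"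
  shows "\<exists>g. g \<in> PX X \<and> (\<forall>x\<in>X. g x > 0) \<and> supnorm_on X g < p \<and>
            g_m M X \<le> 2 * c0 * N_delta (1 / real M) (graph_on X (\<lambda>x. g x + f x))"
proof -
  define K where "K = (M + c0 - 1) div c0"
  have cK: "M \<le> c0 * K" unfolding K_def using c01 by (rule L1)
  have Mpos: "real M > 0" using M1 by simp
  have KM: "real (K + 1) / real M \<le> p / 2"
  proof -
    have "real K * real c0 \<le> real (M + c0 - 1)" unfolding K_def
      by (metis div_times_less_eq_dividend of_nat_le_iff of_nat_mult)
    then have "real K * real c0 \<le> real M + real c0" by simp
    then have "real K \<le> real M / real c0 + 1" using c01 by (simp add: field_simps)
    also have "real M / real c0 \<le> real M * p / 4"
      using c0p p c01 by (metis divide_divide_eq_right divide_mono less_eq_real_def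
        of_nat_0_le_iff zero_less_divide_iff zero_less_numeral)
    finally have "real K + 1 \<le> real M * p / 4 + 2" by simp
    also have "2 \<le> real M * p / 4" using Mp p by (simp add: field_simps)
    finally show ?thesis using Mpos by (simp add: field_simps)
  qed
  define Xc where "Xc j = {x\<in>X. \<lfloor>x * real M\<rfloor> = int j}" for j :: nat
  have "\<exists>T. finite T \<and> T \<subseteq> Xc j \<and> card T = min_card K (Xc j)" for j
  proof (cases "finite (Xc j)")
    case True
    then show ?thesis
    proof (cases "card (Xc j) \<le> K")
      case True then show ?thesis using \<open>finite (Xc j)\<close> unfolding min_card_def by auto
    next
      case False
      then obtain T where "T \<subseteq> Xc j" "card T = K" "finite T"
        using obtain_subset_with_card_n[of K "Xc j"] by auto
      then show ?thesis using False \<open>finite (Xc j)\<close> unfolding min_card_def by auto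
    qed
  next
    case False
    then show ?thesis using infinite_arbitrarily_large[OF False, of K] unfolding min_card_def by auto
  qed
  then obtain T where T: "\<And>j. finite (T j)" "\<And>j. T j \<subseteq> Xc j" "\<And>j. card (T j) = min_card K (Xc j)"
    by metis
  define S where "S = (\<Union>j\<in>{0..M}. T j)"
  have fS: "finite S" unfolding S_def using T by auto
  have SX: "S \<subseteq> X" unfolding S_def using T(2) unfolding Xc_def by blast
  have disj: "T i \<inter> T j = {}" if "i \<noteq> j" for i j
  proof -
    { fix x assume "x \<in> T i" "x \<in> T j"
      then have "x \<in> Xc i" "x \<in> Xc j" using T(2) by blast+
      then have False using that unfolding Xc_def by simp }
    then show ?thesis by blast
  qed
  have cardS: "card S = (\<Sum>j=0..M. card (T j))" unfolding S_def
    by (rule card_UN_disjoint) (use T(1) disj in auto)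
  define col where "col x = \<lfloor>x * real M\<rfloor>" for x
  have fib: "card {x\<in>S. col x = i} \<le> K" for i
  proof -
    have "{x\<in>S. col x = i} \<subseteq> T (nat i)"
      using T(2) unfolding S_def col_def Xc_def by fastforce
    then have "card {x\<in>S. col x = i} \<le> card (T (nat i))" using T(1) card_mono by blast
    then show ?thesis using T(3) min_card_le by (metis order_trans)
  qed
  define c where "c = p / 4"
  define q where "q x = \<lceil>(c + f x) * real M\<rceil>" for x
  obtain r where r1: "\<forall>x\<in>S. q x \<le> r x \<and> r x < q x + int K"
    and r2: "\<forall>x\<in>S. \<forall>y\<in>S. col x = col y \<and> r x = r y \<longrightarrow> x = y"
    using rows_exist[OF fS fib, of q] by blast
  define a where "a x = real_of_int (r x) / real M + 1 / (2 * real M) - c - f x" for x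
  have a_pos: "a x > 0" and a_le: "a x \<le> p / 2" if "x \<in> S" for x
  proof -
    have "real_of_int (q x) \<le> real_of_int (r x)" using r1 that by simp
    moreover have "(c + f x) * real M \<le> real_of_int (q x)" unfolding q_def by simp
    ultimately have "(c + f x) * real M \<le> real_of_int (r x)" by linarith
    then have "c + f x \<le> real_of_int (r x) / real M" using Mpos by (simp add: field_simps)
    moreover have "1 / (2 * real M) > 0" using Mpos by simp
    ultimately show "a x > 0" unfolding a_def by linarith
    have "r x \<le> q x + int K - 1" using r1 that by auto
    then have "real_of_int (r x) \<le> real_of_int (q x + int K - 1)" by linarith
    then have "real_of_int (r x) \<le> real_of_int (q x) + real K - 1" by simp
    moreover have "real_of_int (q x) < (c + f x) * real M + 1" unfolding q_def by linarith
    ultimately have "real_of_int (r x) < (c + f x) * real M + real K" by linarith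
    then have "real_of_int (r x) / real M < c + f x + real K / real M"
      using Mpos by (simp add: field_simps)
    then have "a x < real K / real M + 1 / (2 * real M)" unfolding a_def by simp
    also have "\<dots> \<le> real (K + 1) / real M" using Mpos by (simp add: field_simps)
    finally show "a x \<le> p / 2" using KM by linarith
  qed
  obtain w where w: "w > 0" "\<forall>x\<in>S. \<forall>y\<in>S. x \<noteq> y \<longrightarrow> 2 * w \<le> \<bar>x - y\<bar>"
    using finite_sep[OF fS] by blast
  define g where "g x = c + (\<Sum>y\<in>S. a y * tent w y x)" for x
  have gpoly: "polygonal g"
  proof -
    have "polygonal (\<lambda>x. c + (\<Sum>y\<in>S. a y * tent w y x))"
      by (intro polygonal_add polygonal_const polygonal_sum[OF fS] polygonal_scale polygonal_tent)
    then show ?thesis unfolding g_def[abs_def] .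
  qed
  have gbound: "c \<le> g x \<and> g x \<le> c + p / 2" for x
  proof (cases "\<exists>y\<in>S. \<bar>x - y\<bar> < w")
    case True
    then obtain y where y: "y \<in> S" "\<bar>x - y\<bar> < w" by blast
    have "(\<Sum>z\<in>S. a z * tent w z x) = a y * tent w y x + (\<Sum>z\<in>S - {y}. a z * tent w z x)"
      using fS y(1) by (simp add: sum.remove)
    moreover have "(\<Sum>z\<in>S - {y}. a z * tent w z x) = 0"
    proof (intro sum.neutral ballI)
      fix z assume z: "z \<in> S - {y}"
      then have "2 * w \<le> \<bar>z - y\<bar>" using w y by auto
      then have "\<bar>x - z\<bar> \<ge> w" using y by linarith
      then show "a z * tent w z x = 0" using tent_zero[OF w(1)] by simp
    qed
    moreover have "0 \<le> a y * tent w y x"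
      using a_pos[OF y(1)] tent_nonneg[OF w(1), of y x] by simp
    moreover have "a y * tent w y x \<le> a y * 1"
      using a_pos[OF y(1)] tent_le1[OF w(1), of y x] by (intro mult_left_mono) auto
    moreover have "a y \<le> p / 2" using a_le[OF y(1)] .
    ultimately show ?thesis unfolding g_def by simp
  next
    case False
    then have "(\<Sum>z\<in>S. a z * tent w z x) = 0"
      by (intro sum.neutral ballI) (auto simp: tent_zero[OF w(1)] not_less)
    then show ?thesis unfolding g_def using p by simp
  qed
  have gS: "g y = c + a y" if "y \<in> S" for y
  proof -
    have "(\<Sum>z\<in>S. a z * tent w z y) = a y * tent w y y + (\<Sum>z\<in>S - {y}. a z * tent w z y)"
      using fS that by (simp add: sum.remove)
    moreover have "(\<Sum>z\<in>S - {y}. a z * tent w z y) = 0"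
    proof (intro sum.neutral ballI)
      fix z assume z: "z \<in> S - {y}"
      then have "2 * w \<le> \<bar>z - y\<bar>" using w that by auto
      then have "\<bar>y - z\<bar> \<ge> w" using w by linarith
      then show "a z * tent w z y = 0" using tent_zero[OF w(1)] by simp
    qed
    ultimately show ?thesis unfolding g_def using tent_center[OF w(1)] by simp
  qed
  obtain B where B: "\<forall>x\<in>{0..1}. \<bar>\<phi> x\<bar> \<le> B" using polygonal_bounded[OF phi] by blast
  define G where "G = graph_on X (\<lambda>x. g x + f x)"
  define Box where "Box = {n :: int \<times> int. \<exists>z\<in>G.
      of_int (fst n) * (1 / real M) \<le> fst z \<and> fst z < (of_int (fst n) + 1) * (1 / real M) \<and>
      of_int (snd n) * (1 / real M) \<le> snd z \<and> snd z < (of_int (snd n) + 1) * (1 / real M)}"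
  have NB: "N_delta (1 / real M) G = card Box" unfolding N_delta_def Box_def ..
  have finBox: "finite Box"
  proof -
    have "Box \<subseteq> {-1..int M + 1} \<times> {\<lfloor>-B * M\<rfloor> - 1 .. \<lceil>(B + p) * M\<rceil> + 1}"
    proof
      fix n assume "n \<in> Box"
      then obtain z where z: "z \<in> G" "of_int (fst n) * (1 / real M) \<le> fst z"
        "fst z < (of_int (fst n) + 1) * (1 / real M)"
        "of_int (snd n) * (1 / real M) \<le> snd z" "snd z < (of_int (snd n) + 1) * (1 / real M)"
        unfolding Box_def by blast
      then obtain x where x: "x \<in> X" "z = (x, g x + f x)" unfolding G_def graph_on_def by blast
      have x01: "0 \<le> x" "x \<le> 1" using X x by auto
      have fb: "\<bar>f x\<bar> \<le> B" using B fphi x X by auto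
      have gb: "0 \<le> g x" "g x \<le> p" using gbound[of x] p unfolding c_def by auto
      have zx: "fst z = x" "snd z = g x + f x" using x(2) by simp_all
      have "real_of_int (fst n) / real M \<le> x" "x < (real_of_int (fst n) + 1) / real M"
        using z(2,3) unfolding zx by simp_all
      then have "real_of_int (fst n) \<le> x * M" "x * M < real_of_int (fst n) + 1"
        using Mpos by (simp_all add: pos_divide_le_eq pos_less_divide_eq)
      moreover have "x * real M \<le> 1 * real M" using x01 by (intro mult_right_mono) auto
      moreover have "0 \<le> x * real M" using x01 by simp
      ultimately have "real_of_int (fst n) \<le> real M" "real_of_int (fst n) > -1"
        by linarith+
      then have 1: "fst n \<in> {-1..int M + 1}" by simp
      have "real_of_int (snd n) / real M \<le> g x + f x" "g x + f x < (real_of_int (snd n) + 1) / real M"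
        using z(4,5) unfolding zx by simp_all
      then have "real_of_int (snd n) \<le> (g x + f x) * M" "(g x + f x) * M < real_of_int (snd n) + 1"
        using Mpos by (simp_all add: pos_divide_le_eq pos_less_divide_eq)
      moreover have "(g x + f x) * M \<le> (B + p) * M" "-B * M \<le> (g x + f x) * M"
        using fb gb Mpos by (intro mult_right_mono; linarith)+
      ultimately have "real_of_int (snd n) \<le> (B + p) * M" "-B * M - 1 < real_of_int (snd n)"
        by linarith+
      moreover note le_of_int_ceiling[of "(B + p) * M"] of_int_floor_le[of "-B * M"]
      ultimately have "real_of_int (snd n) \<le> real_of_int \<lceil>(B + p) * M\<rceil>"
          "real_of_int \<lfloor>-B * M\<rfloor> - 1 < real_of_int (snd n)"
        by linarith+
      then have "real_of_int (snd n) \<le> real_of_int \<lceil>(B + p) * M\<rceil>"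
          "real_of_int (\<lfloor>-B * M\<rfloor> - 1) < real_of_int (snd n)" by simp_all
      then have "snd n \<le> \<lceil>(B + p) * M\<rceil>" "\<lfloor>-B * M\<rfloor> - 1 \<le> snd n"
        by (simp only: of_int_le_iff of_int_less_iff, simp)
      then have 2: "snd n \<in> {\<lfloor>-B * M\<rfloor> - 1 .. \<lceil>(B + p) * M\<rceil> + 1}" by simp
      show "n \<in> {-1..int M + 1} \<times> {\<lfloor>-B * M\<rfloor> - 1 .. \<lceil>(B + p) * M\<rceil> + 1}"
        using 1 2 by (cases n) auto
    qed
    then show ?thesis by (rule finite_subset) auto
  qed
  define bx where "bx y = (col y, r y)" for y
  have bxB: "bx ` S \<subseteq> Box"
  proof
    fix n assume "n \<in> bx ` S"
    then obtain y where y: "y \<in> S" "n = bx y" by blast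
    have yX: "y \<in> X" using y SX by auto
    have val: "g y + f y = real_of_int (r y) / real M + 1 / (2 * real M)"
      using gS[OF y(1)] unfolding a_def by simp
    have "(y, g y + f y) \<in> G" unfolding G_def graph_on_def using yX by blast
    moreover have "of_int (col y) * (1 / real M) \<le> y" "y < (of_int (col y) + 1) * (1 / real M)"
      unfolding col_def using Mpos
      by (simp_all add: field_simps) linarith+
    moreover have "of_int (r y) * (1 / real M) \<le> g y + f y"
      "g y + f y < (of_int (r y) + 1) * (1 / real M)"
      unfolding val using Mpos by (simp_all add: field_simps)
    ultimately show "n \<in> Box" unfolding Box_def y(2) bx_def by force
  qed
  have "inj_on bx S" unfolding inj_on_def bx_def using r2 by auto
  then have cSN: "card S \<le> N_delta (1 / real M) G"
    unfolding NB using card_mono[OF finBox bxB] card_image by metis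
  have gmS: "g_m M X \<le> 2 * c0 * card S"
  proof -
    have "g_m M X \<le> (\<Sum>k=1..M. min_card M (Xc (k - 1)) + min_card M (Xc k))"
      unfolding g_m_def
    proof (intro sum_mono)
      fix k assume k: "k \<in> {1..M}"
      have "X \<inter> {real (k - 1) / real M..real k / real M} \<subseteq> Xc (k - 1) \<union> Xc k"
      proof
        fix x assume x: "x \<in> X \<inter> {real (k - 1) / real M..real k / real M}"
        have "\<lfloor>x * M\<rfloor> = int (k - 1) \<or> \<lfloor>x * M\<rfloor> = int k"
          using col_cover[OF M1, of k x] k x by auto
        then show "x \<in> Xc (k - 1) \<union> Xc k" using x unfolding Xc_def by blast
      qed
      then show "min_card M (X \<inter> {real (k - 1) / real M..real k / real M})
          \<le> min_card M (Xc (k - 1)) + min_card M (Xc k)"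
        by (meson min_card_mono min_card_union order_trans)
    qed
    also have "\<dots> \<le> 2 * (\<Sum>j=0..M. min_card M (Xc j))"
      using sum_shift_ident[of "\<lambda>j. min_card M (Xc j)" M] by linarith
    also have "\<dots> \<le> 2 * (\<Sum>j=0..M. c0 * min_card K (Xc j))"
      using min_card_scale[OF cK c01] by (intro mult_left_mono sum_mono) auto
    also have "\<dots> = 2 * c0 * card S" unfolding cardS T(3) by (simp add: sum_distrib_left mult.assoc)
    finally show ?thesis .
  qed
  have "g \<in> PX X" unfolding PX_def using gpoly by blast
  moreover have "\<forall>x\<in>X. g x > 0" using gbound p unfolding c_def by (meson less_le_trans zero_less_divide_iff zero_less_numeral)
  moreover have "supnorm_on X g < p"
  proof (cases "X = {}")
    case True then show ?thesis unfolding supnorm_on_def using p by simp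
  next
    case False
    have "(SUP x\<in>X. \<bar>g x\<bar>) \<le> 3 * p / 4"
    proof (rule cSUP_least[OF False])
      fix x show "\<bar>g x\<bar> \<le> 3 * p / 4" using gbound[of x] p unfolding c_def by auto
    qed
    then show ?thesis unfolding supnorm_on_def using False p by simp
  qed
  moreover have "g_m M X \<le> 2 * c0 * N_delta (1 / real M) G"
    using gmS cSN by (meson mult_le_mono2 order_trans)
  ultimately show ?thesis unfolding G_def by blast
qed



lemma ev_real_ge: "\<forall>\<^sub>F M in sequentially. b \<le> real M"
proof -
  obtain N :: nat where "b \<le> real N" using real_arch_simple by blast
  then show ?thesis unfolding eventually_sequentially
    by (metis of_nat_le_iff order_trans)
qed

lemma u_bounds: "0 \<le> ln (real (g_m m X)) / ln (real m) \<and> ln (real (g_m m X)) / ln (real m) \<le> 2"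
proof (cases "g_m m X = 0 \<or> m \<le> 1")
  case True
  then show ?thesis
  proof
    assume "g_m m X = 0" then show ?thesis by simp
  next
    assume "m \<le> 1"
    then have "m = 0 \<or> m = 1" by auto
    then show ?thesis by auto
  qed
next
  case False
  then have g1: "real (g_m m X) \<ge> 1" and m2: "real m \<ge> 2" by auto
  have lm: "ln (real m) > 0" using m2 by simp
  have "ln (real (g_m m X)) \<le> ln (real m * real m)"
    using g1 m2 g_m_le[of m X] by (subst ln_le_cancel_iff) (auto simp flip: of_nat_mult)
  also have "\<dots> = 2 * ln (real m)" using m2 by (simp add: ln_mult)
  finally have "ln (real (g_m m X)) / ln (real m) \<le> 2" using lm by (simp add: divide_le_eq)
  moreover have "0 \<le> ln (real (g_m m X))" using g1 by simp
  ultimately show ?thesis using lm by simp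
qed

lemma lhs_nonneg:
  assumes "0 < d" "d < 1"
  shows "0 \<le> ln (real n) / - ln d"
proof -
  have "0 \<le> ln (real n)" by (cases "n = 0") auto
  moreover have "- ln d > 0" using assms by simp
  ultimately show ?thesis by (intro divide_nonneg_pos) auto
qed

theorem lemma1:
  fixes X :: "real set" and f :: "real \<Rightarrow> real" and \<delta>0 p \<epsilon> :: real
  assumes "X \<subseteq> {0..1}" and "f \<in> PX X" and "\<delta>0 > 0" and "p > 0" and "\<epsilon> > 0"
  shows "\<exists>\<delta>1 g. 0 < \<delta>1 \<and> \<delta>1 < \<delta>0 \<and> g \<in> PX X \<and> (\<forall>x\<in>X. g x > 0) \<and>
           supnorm_on X g < p \<and>
           ereal (ln (real (N_delta \<delta>1 (graph_on X (\<lambda>x. g x + f x)))) / - ln \<delta>1)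
             \<ge> limsup (\<lambda>m. ereal (ln (real (g_m m X)) / ln (real m))) - ereal \<epsilon>"
proof -
  note X = assms(1) and d0 = assms(3) and p = assms(4) and eps = assms(5)
  obtain \<phi> where phi: "polygonal \<phi>" "\<forall>x\<in>X. f x = \<phi> x" using assms(2) unfolding PX_def by blast
  define u where "u m = ereal (ln (real (g_m m X)) / ln (real m))" for m
  define L where "L = limsup u"
  have L2: "L \<le> 2" unfolding L_def
    by (rule Limsup_bounded) (auto simp: u_def u_bounds)
  show ?thesis
  proof (cases "L \<le> ereal \<epsilon>")
    case True
    define d where "d = min (\<delta>0 / 2) (1 / 2)"
    have d: "0 < d" "d < \<delta>0" "d < 1" unfolding d_def using d0 by auto
    have g: "(\<lambda>x. p / 2) \<in> PX X" unfolding PX_def using polygonal_const by blast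
    have sn: "supnorm_on X (\<lambda>x. p / 2) < p" unfolding supnorm_on_def using p by auto
    have "L - ereal \<epsilon> \<le> 0" using True by (cases L) auto
    also have "0 \<le> ereal (ln (real (N_delta d (graph_on X (\<lambda>x. p / 2 + f x)))) / - ln d)"
      using lhs_nonneg[OF d(1,3)] by simp
    finally show ?thesis using d g sn p unfolding L_def u_def
      by (intro exI[of _ d] exI[of _ "\<lambda>x. p / 2"]) auto
  next
    case False
    then obtain s where s: "L = ereal s" "s > \<epsilon>" using L2 by (cases L) auto
    have freq: "\<exists>\<^sub>F m in sequentially. u m > ereal (s - \<epsilon> / 2)"
    proof -
      have "\<not> (\<forall>\<^sub>F m in sequentially. u m \<le> ereal (s - \<epsilon> / 2))"
      proof
        assume "\<forall>\<^sub>F m in sequentially. u m \<le> ereal (s - \<epsilon> / 2)"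
        then have "L \<le> ereal (s - \<epsilon> / 2)" unfolding L_def by (rule Limsup_bounded)
        then show False using s eps by simp
      qed
      then show ?thesis by (simp add: not_eventually not_le)
    qed
    define c0 :: nat where "c0 = nat \<lceil>4 / p\<rceil> + 1"
    have c01: "c0 \<ge> 1" unfolding c0_def by simp
    have c0p: "real c0 \<ge> 4 / p" unfolding c0_def by linarith
    define b where "b = max (max 2 (8 / p)) (max (2 / \<delta>0) (exp (2 * ln (2 * real c0) / \<epsilon> + 1)))"
    obtain M where M: "u M > ereal (s - \<epsilon> / 2)" "b \<le> real M"
      using frequently_ex[OF frequently_eventually_frequently[OF freq ev_real_ge[of b]]] by blast
    have M2: "real M \<ge> 2" and M8: "real M \<ge> 8 / p" and Md: "real M \<ge> 2 / \<delta>0"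
      and Mexp: "real M \<ge> exp (2 * ln (2 * real c0) / \<epsilon> + 1)"
      using M(2) unfolding b_def by auto
    have M1: "M \<ge> 1" using M2 by simp
    have Mpos: "real M > 0" using M2 by simp
    obtain g where gall: "g \<in> PX X \<and> (\<forall>x\<in>X. g x > 0) \<and> supnorm_on X g < p \<and>
      g_m M X \<le> 2 * c0 * N_delta (1 / real M) (graph_on X (\<lambda>x. g x + f x))"
      using construction[OF X phi(1) phi(2) p M1 c01 c0p M8] by (rule exE)
    note g = gall[THEN conjunct1] gall[THEN conjunct2, THEN conjunct1]
      gall[THEN conjunct2, THEN conjunct2, THEN conjunct1] gall[THEN conjunct2, THEN conjunct2, THEN conjunct2]
    define N where "N = N_delta (1 / real M) (graph_on X (\<lambda>x. g x + f x))"
    define G where "G = g_m M X"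
    have lnM: "ln (real M) > 0" using M2 by simp
    have uM: "ln (real G) / ln (real M) > s - \<epsilon> / 2" using M(1) unfolding u_def G_def by simp
    then have lnG: "ln (real G) > (s - \<epsilon> / 2) * ln (real M)" using lnM by (simp add: pos_less_divide_eq)
    have "(s - \<epsilon> / 2) * ln (real M) > 0" using s eps lnM by simp
    then have "ln (real G) > 0" using lnG by linarith
    then have G1: "G \<ge> 1" by (cases "G = 0") auto
    have "real G \<le> real (2 * c0 * N)" unfolding G_def N_def using g(4) by (simp only: of_nat_le_iff)
    then have GN: "real G \<le> 2 * real c0 * real N" by simp
    have N1: "real N > 0" using G1 GN by (cases "N = 0") auto
    have "ln (real G) \<le> ln (2 * real c0 * real N)" using G1 GN N1 c01 by (subst ln_le_cancel_iff) auto
    also have "\<dots> = ln (2 * real c0) + ln (real N)" using N1 c01 by (simp add: ln_mult)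
    finally have lnGN: "ln (real G) \<le> ln (2 * real c0) + ln (real N)" .
    have "ln (real M) \<ge> 2 * ln (2 * real c0) / \<epsilon> + 1"
      using Mexp Mpos by (metis exp_gt_zero ln_exp ln_le_cancel_iff)
    then have h1: "\<epsilon> / 2 * (2 * ln (2 * real c0) / \<epsilon> + 1) \<le> \<epsilon> / 2 * ln (real M)"
      using eps by (intro mult_left_mono) auto
    have h2: "\<epsilon> / 2 * (2 * ln (2 * real c0) / \<epsilon> + 1) > ln (2 * real c0)"
      using eps by (simp add: field_simps)
    have lc: "ln (2 * real c0) < \<epsilon> / 2 * ln (real M)" using h1 h2 by linarith
    have "ln (real N) > (s - \<epsilon>) * ln (real M)"
      using lnG lnGN lc by (simp add: algebra_simps)
    then have key: "ln (real N) / ln (real M) \<ge> s - \<epsilon>" using lnM by (simp add: pos_le_divide_eq)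
    have d1: "0 < 1 / real M" "1 / real M < \<delta>0"
      using Mpos Md d0 by (auto simp: field_simps)
    have "- ln (1 / real M) = ln (real M)" using Mpos by (simp add: ln_div)
    then have "ereal (ln (real N) / - ln (1 / real M)) \<ge> L - ereal \<epsilon>"
      using key s by simp
    then show ?thesis using d1 g unfolding N_def L_def u_def
      by (intro exI[of _ "1 / real M"] exI[of _ g]) auto
  qed
qed


end
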